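(* Let $\epsilon\in(0,1]$ be close to $0$, let $r=\Theta(\log n)$, and let $d$ be an integer with $d\geq 6\epsilon^{-2} r\log n$ and $d=\Theta(\epsilon^{-2}r\log n)$. Let $Q\in\mathbb{R}^{n\times d}$ be a random matrix whose entries are independent and uniformly distributed on $\{+\sqrt{r/d},-\sqrt{r/d}\}$, and let $M=\sigma(QQ^\top)$, where $\sigma$ is the entrywise exponential function. Then, with probability at least $1-n^{-1}$, any sparse estimator or low-rank estimator of $M$ needs $\Omega(n^2)$ parameters to achieve Frobenius error $O(n)$, while, with probability at least $1-n^{-1}$, there is a sparse + low-rank estimator of $M$ with $O(n)$ parameters achieving Frobenius error $O(n)$.
   Context: Asymptotic notation is with respect to $n\to\infty$. A sparse estimator is a matrix with few nonzero entries (parameters = number of nonzeros); a low-rank estimator of rank $r'$ has $\Theta(n r')$ parameters; a sparse + low-rank estimator is a sum $S+R$ of such matrices, with parameters counted additively. Error is measured as $\|M-\widehat M\|_F$. *)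

theory Defs
  imports "HOL-Probability.Probability"
begin

text \<open>Matrices are functions nat => nat => real, only indices below n matter.
  The random sign pattern s assigns to each (i,k) with i<n, k<d a value in {-1,1};
  the uniform distribution on all such patterns is the product of independent
  uniform signs.\<close>

definition sign_mats :: "nat \<Rightarrow> nat \<Rightarrow> (nat \<times> nat \<Rightarrow> real) set" where
  "sign_mats n d = PiE ({..<n} \<times> {..<d}) (\<lambda>_. {-1, 1})"

definition sign_pmf :: "nat \<Rightarrow> nat \<Rightarrow> (nat \<times> nat \<Rightarrow> real) pmf" where
  "sign_pmf n d = pmf_of_set (sign_mats n d)"

definition rand_Q :: "nat \<Rightarrow> real \<Rightarrow> (nat \<times> nat \<Rightarrow> real) \<Rightarrow> nat \<Rightarrow> nat \<Rightarrow> real" where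
  "rand_Q d r s i k = sqrt (r / real d) * s (i, k)"

definition kernel_M :: "nat \<Rightarrow> real \<Rightarrow> (nat \<times> nat \<Rightarrow> real) \<Rightarrow> nat \<Rightarrow> nat \<Rightarrow> real" where
  "kernel_M d r s i j = exp (\<Sum>k<d. rand_Q d r s i k * rand_Q d r s j k)"

definition frob_err :: "nat \<Rightarrow> (nat \<Rightarrow> nat \<Rightarrow> real) \<Rightarrow> (nat \<Rightarrow> nat \<Rightarrow> real) \<Rightarrow> real" where
  "frob_err n A B = sqrt (\<Sum>i<n. \<Sum>j<n. (A i j - B i j)^2)"

text \<open>Number of parameters of a sparse estimator: its number of nonzero entries.\<close>
definition nnz :: "nat \<Rightarrow> (nat \<Rightarrow> nat \<Rightarrow> real) \<Rightarrow> nat" where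
  "nnz n S = card {(i, j). i < n \<and> j < n \<and> S i j \<noteq> 0}"

definition mat_rank :: "nat \<Rightarrow> (nat \<Rightarrow> nat \<Rightarrow> real) \<Rightarrow> nat" where
  "mat_rank n R = (LEAST k. \<exists>U V. \<forall>i<n. \<forall>j<n. R i j = (\<Sum>l<k. U i l * V j l))"

text \<open>Parameters of a low-rank estimator of rank r': n * r' (= Theta(n r')).\<close>
definition lowrank_params :: "nat \<Rightarrow> (nat \<Rightarrow> nat \<Rightarrow> real) \<Rightarrow> nat" where
  "lowrank_params n R = n * mat_rank n R"

end

theory Submission
  imports Defs "HOL-Real_Asymp.Real_Asymp"
begin


definition hh :: "real \<Rightarrow> real" where
  "hh x = exp (2*x) + exp (-(2*x)) - 2"

lemma hh_even: "hh (-x) = hh x"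
  unfolding hh_def by simp

lemma hh_abs: "hh x = hh \<bar>x\<bar>"
  by (cases "x \<ge> 0") (auto simp: hh_even)

lemma hh_ge_sq: "2 * x^2 \<le> hh x"
proof -
  define y where "y = 2*\<bar>x\<bar>"
  have y0: "0 \<le> y" unfolding y_def by simp
  have e1: "1 + y + y^2/2 \<le> exp y" using exp_lower_Taylor_quadratic[OF y0] .
  have e2: "1 + (-y) \<le> exp (-y)" using exp_ge_add_one_self .
  have "hh x = exp y + exp (-y) - 2" unfolding y_def using hh_abs[of x] by (simp add: hh_def)
  moreover have "y^2 = 4 * x^2" unfolding y_def by (simp add: power2_eq_square algebra_simps)
  ultimately show ?thesis using e1 e2 by linarith
qed

lemma hh_nonneg: "0 \<le> hh x"
  using hh_ge_sq[of x] by (smt (verit) zero_le_power2)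

lemma hh_ge_exp1: "(exp x - 1)^2 \<le> hh x"
proof -
  define y where "y = exp x"
  have y0: "y > 0" unfolding y_def by simp
  have e2: "exp (2*x) = y^2" unfolding y_def by (simp add: exp_double[symmetric] power2_eq_square exp_add[symmetric])
  have e3: "exp (-(2*x)) = 1 / y^2" using e2 by (simp add: exp_minus field_simps)
  have key: "0 \<le> (y-1)^2 * (2*y+1)" using y0 by simp
  have eq: "y^2 + 1/y^2 - 2 - (y-1)^2 = ((y-1)^2*(2*y+1))/y^2"
    using y0 by (simp add: field_simps power2_eq_square)
  have "0 \<le> ((y-1)^2*(2*y+1))/y^2" using key by simp
  then have "(y - 1)^2 \<le> y^2 + 1/y^2 - 2" using eq by linarith
  then show ?thesis unfolding hh_def e2 e3 y_def[symmetric] by simp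
qed

lemma hh_exp_abs: "exp (2*\<bar>x\<bar>) \<le> hh x + 2"
  using hh_abs[of x] by (simp add: hh_def)

lemma cosh_le_sq: fixes c :: real assumes "\<bar>c\<bar> \<le> 1" shows "cosh c \<le> 1 + c^2"
proof -
  define y where "y = \<bar>c\<bar>"
  have y0: "0 \<le> y" "y \<le> 1" using assms by (auto simp: y_def)
  have c: "cosh c = (exp y + exp (-y)) / 2"
    unfolding y_def by (cases "c \<ge> 0") (auto simp: cosh_def)
  have e1: "exp y \<le> 1 + y + y^2" using exp_bound y0 by simp
  have e0: "1 + y \<le> exp y" using exp_ge_add_one_self .
  have "exp (-y) = 1 / exp y" by (simp add: exp_minus field_simps)
  also have "\<dots> \<le> 1 / (1 + y)" using e0 y0 by (intro divide_left_mono) auto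
  also have "\<dots> \<le> 1 - y + y^2"
  proof -
    have "1 \<le> (1 - y + y^2) * (1 + y)" using y0 by (simp add: algebra_simps power2_eq_square power3_eq_cube)
    then show ?thesis using y0 by (simp add: field_simps)
  qed
  finally have "exp (-y) \<le> 1 - y + y^2" .
  then have "cosh c \<le> (2 + 2*y^2)/2" using c e1 by simp
  also have "\<dots> = 1 + c^2" unfolding y_def by simp
  finally show ?thesis .
qed

lemma cosh_pow_le: fixes c :: real assumes "\<bar>c\<bar> \<le> 1" shows "cosh c ^ d \<le> exp (c^2 * real d)"
proof -
  have "cosh c ^ d \<le> (1 + c^2) ^ d"
    using cosh_le_sq[OF assms] by (intro power_mono) auto
  also have "\<dots> \<le> exp (c^2) ^ d"
    by (intro power_mono) (auto simp: exp_ge_add_one_self add.commute)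
  also have "\<dots> = exp (c^2 * real d)" by (simp add: exp_of_nat2_mult)
  finally show ?thesis .
qed

lemma left_kernel:
  fixes c :: "nat \<Rightarrow> nat \<Rightarrow> real"
  assumes "finite J" "k < card J"
  shows "\<exists>lam. (\<exists>j\<in>J. lam j \<noteq> 0) \<and> (\<forall>l<k. (\<Sum>j\<in>J. lam j * c j l) = 0)"
  using assms
proof (induction k arbitrary: J c)
  case 0
  then obtain j where "j \<in> J" by fastforce
  then show ?case by (intro exI[of _ "\<lambda>_. 1"]) auto
next
  case (Suc k)
  show ?case
  proof (cases "\<forall>j\<in>J. c j k = 0")
    case True
    from Suc.IH[of J c] Suc.prems obtain lam where
      l1: "\<exists>j\<in>J. lam j \<noteq> 0" and l2: "\<forall>l<k. (\<Sum>j\<in>J. lam j * c j l) = 0" by auto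
    have "\<forall>l<Suc k. (\<Sum>j\<in>J. lam j * c j l) = 0"
    proof (intro allI impI)
      fix l assume "l < Suc k"
      then consider "l < k" | "l = k" by linarith
      then show "(\<Sum>j\<in>J. lam j * c j l) = 0"
        by cases (use l2 True in auto)
    qed
    then show ?thesis using l1 by blast
  next
    case False
    then obtain j0 where j0: "j0 \<in> J" "c j0 k \<noteq> 0" by blast
    define c' where "c' j l = c j l - (c j k / c j0 k) * c j0 l" for j l
    have fin: "finite (J - {j0})" using Suc.prems by auto
    have cardlt: "k < card (J - {j0})" using Suc.prems j0 by simp
    from Suc.IH[OF fin cardlt, of c'] obtain mu where
      m1: "\<exists>j\<in>J - {j0}. mu j \<noteq> 0" and m2: "\<forall>l<k. (\<Sum>j\<in>J - {j0}. mu j * c' j l) = 0" by blast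
    define lam where "lam j = (if j = j0 then - (\<Sum>j\<in>J - {j0}. mu j * c j k / c j0 k) else mu j)" for j
    have lam0: "lam j0 = - (\<Sum>j\<in>J - {j0}. mu j * c j k / c j0 k)" unfolding lam_def by simp
    have "\<forall>l<Suc k. (\<Sum>j\<in>J. lam j * c j l) = 0"
    proof (intro allI impI)
      fix l assume l: "l < Suc k"
      have s1: "(\<Sum>j\<in>J. lam j * c j l) = lam j0 * c j0 l + (\<Sum>j\<in>J - {j0}. lam j * c j l)"
        using Suc.prems(1) j0(1) by (rule sum.remove)
      have s2: "(\<Sum>j\<in>J - {j0}. lam j * c j l) = (\<Sum>j\<in>J - {j0}. mu j * c j l)"
        by (rule sum.cong) (auto simp: lam_def)
      have s3: "(\<Sum>j\<in>J - {j0}. mu j * c j k / c j0 k) = (\<Sum>j\<in>J - {j0}. mu j * c j k) / c j0 k"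
        by (rule sum_divide_distrib[symmetric])
      have eq: "(\<Sum>j\<in>J. lam j * c j l) = (\<Sum>j\<in>J - {j0}. mu j * c j l) - (\<Sum>j\<in>J - {j0}. mu j * c j k / c j0 k) * c j0 l"
        unfolding s1 s2 lam0 by simp
      show "(\<Sum>j\<in>J. lam j * c j l) = 0"
      proof (cases "l = k")
        case True
        have "(\<Sum>j\<in>J - {j0}. mu j * c j k / c j0 k) * c j0 k = (\<Sum>j\<in>J - {j0}. mu j * c j k)"
          unfolding s3 using j0(2) by simp
        then show ?thesis using eq unfolding True by linarith
      next
        case False
        then have "l < k" using l by simp
        then have z: "(\<Sum>j\<in>J - {j0}. mu j * c' j l) = 0" using m2 by simp
        have "(\<Sum>j\<in>J - {j0}. mu j * c' j l) = (\<Sum>j\<in>J - {j0}. mu j * c j l - (mu j * c j k / c j0 k) * c j0 l)"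
          unfolding c'_def by (rule sum.cong) (simp_all add: right_diff_distrib)
        also have "\<dots> = (\<Sum>j\<in>J - {j0}. mu j * c j l) - (\<Sum>j\<in>J - {j0}. mu j * c j k / c j0 k) * c j0 l"
          by (simp add: sum_subtractf sum_distrib_right)
        finally show ?thesis unfolding eq using z by simp
      qed
    qed
    moreover have "\<exists>j\<in>J. lam j \<noteq> 0"
    proof -
      from m1 obtain j where "j \<in> J - {j0}" "mu j \<noteq> 0" by blast
      then show ?thesis unfolding lam_def by (intro bexI[of _ j]) auto
    qed
    ultimately show ?thesis by blast
  qed
qed

lemma dd_rank:
  fixes R U V :: "nat \<Rightarrow> nat \<Rightarrow> real"
  assumes dd: "\<forall>i<n. (\<Sum>j\<in>{..<n}-{i}. \<bar>R i j\<bar>) < \<bar>R i i\<bar>"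
    and fac: "\<forall>i<n. \<forall>j<n. R i j = (\<Sum>l<k. U i l * V j l)"
  shows "n \<le> k"
proof (rule ccontr)
  assume "\<not> n \<le> k"
  then have "k < card {..<n}" by simp
  from left_kernel[OF _ this, of V] obtain lam where
    l1: "\<exists>j\<in>{..<n}. lam j \<noteq> 0" and l2: "\<forall>l<k. (\<Sum>j<n. lam j * V j l) = 0" by auto
  have zero: "(\<Sum>j<n. R i j * lam j) = 0" if i: "i < n" for i
  proof -
    have "(\<Sum>j<n. R i j * lam j) = (\<Sum>j<n. \<Sum>l<k. U i l * (lam j * V j l))"
      using fac i by (simp add: sum_distrib_right sum_distrib_left algebra_simps)
    also have "\<dots> = (\<Sum>l<k. U i l * (\<Sum>j<n. lam j * V j l))"
      by (subst sum.swap) (simp add: sum_distrib_left)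
    also have "\<dots> = 0" using l2 by simp
    finally show ?thesis .
  qed
  have ne: "{..<n} \<noteq> {}" using l1 by auto
  define m where "m = Max ((\<lambda>j. \<bar>lam j\<bar>) ` {..<n})"
  have "m \<in> (\<lambda>j. \<bar>lam j\<bar>) ` {..<n}" unfolding m_def by (rule Max_in) (use ne in auto)
  then obtain i0 where i0: "i0 < n" "\<bar>lam i0\<bar> = m" by auto
  have mge: "\<bar>lam j\<bar> \<le> m" if "j < n" for j unfolding m_def using that by (intro Max_ge) auto
  obtain j1 where j1: "j1 < n" "lam j1 \<noteq> 0" using l1 by auto
  have mpos: "m > 0" using mge[OF j1(1)] j1(2) by linarith
  have "R i0 i0 * lam i0 + (\<Sum>j\<in>{..<n}-{i0}. R i0 j * lam j) = 0"
    using zero[OF i0(1)] i0(1) by (simp add: sum.remove[of "{..<n}" i0])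
  then have "R i0 i0 * lam i0 = - (\<Sum>j\<in>{..<n}-{i0}. R i0 j * lam j)" by linarith
  then have "\<bar>R i0 i0 * lam i0\<bar> = \<bar>\<Sum>j\<in>{..<n}-{i0}. R i0 j * lam j\<bar>" by simp
  then have "\<bar>R i0 i0\<bar> * m = \<bar>\<Sum>j\<in>{..<n}-{i0}. R i0 j * lam j\<bar>"
    using i0 by (simp add: abs_mult)
  also have "\<dots> \<le> (\<Sum>j\<in>{..<n}-{i0}. \<bar>R i0 j\<bar> * m)"
    by (rule order_trans[OF sum_abs]) (auto simp: abs_mult intro!: sum_mono mult_left_mono mge)
  also have "\<dots> = (\<Sum>j\<in>{..<n}-{i0}. \<bar>R i0 j\<bar>) * m" by (simp add: sum_distrib_right)
  also have "\<dots> < \<bar>R i0 i0\<bar> * m" using dd i0(1) mpos by simp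
  finally show False by simp
qed

lemma mat_rank_ge:
  assumes dd: "\<forall>i<n. (\<Sum>j\<in>{..<n}-{i}. \<bar>R i j\<bar>) < \<bar>R i i\<bar>"
  shows "n \<le> mat_rank n R"
proof -
  let ?P = "\<lambda>k::nat. \<exists>U V. \<forall>i<n. \<forall>j<n. R i j = (\<Sum>l<k. U i l * V j l)"
  have "?P n"
  proof (intro exI allI impI)
    fix i j assume "i < n" "j < n"
    then show "R i j = (\<Sum>l<n. R i l * (if j = l then 1 else 0))"
      by (simp add: if_distrib cong: if_cong)
  qed
  then have ex: "\<exists>k. ?P k" by (rule exI)
  have "?P (LEAST k. ?P k)" by (rule LeastI_ex[OF ex])
  then obtain U V where "\<forall>i<n. \<forall>j<n. R i j = (\<Sum>l<(LEAST k. ?P k). U i l * V j l)" by blast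
  from dd_rank[OF dd this] show ?thesis unfolding mat_rank_def .
qed



definition XX :: "nat \<Rightarrow> (nat \<times> nat \<Rightarrow> real) \<Rightarrow> nat \<Rightarrow> nat \<Rightarrow> real" where
  "XX d s i j = (\<Sum>t<d. s (i,t) * s (j,t))"

lemma sign_mats_finite: "finite (sign_mats n d)"
  unfolding sign_mats_def by (intro finite_PiE) auto

lemma sign_mats_ne: "sign_mats n d \<noteq> {}"
  unfolding sign_mats_def by (simp add: PiE_eq_empty_iff)

lemma sign_mats_card: "card (sign_mats n d) = 2^(n*d)"
  unfolding sign_mats_def by (simp add: card_PiE card_cartesian_product) (simp add: numeral_2_eq_2)

lemma sign_val: "s \<in> sign_mats n d \<Longrightarrow> i < n \<Longrightarrow> t < d \<Longrightarrow> s (i,t) = -1 \<or> s (i,t) = 1"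
  unfolding sign_mats_def by (auto simp: PiE_iff)

lemma sign_sq: "s \<in> sign_mats n d \<Longrightarrow> i < n \<Longrightarrow> t < d \<Longrightarrow> s (i,t) * s (i,t) = 1"
  using sign_val[of s n d i t] by auto

lemma sign_out: "s \<in> sign_mats n d \<Longrightarrow> p \<notin> {..<n} \<times> {..<d} \<Longrightarrow> s p = undefined"
  unfolding sign_mats_def by (cases p) (auto simp: PiE_iff extensional_def)

lemma XX_diag: "s \<in> sign_mats n d \<Longrightarrow> i < n \<Longrightarrow> XX d s i i = real d"
  unfolding XX_def using sign_sq[of s n d i] by simp

lemma row_prod_sum:
  fixes g :: "real \<Rightarrow> real"
  assumes j: "j < n"
  shows "(\<Sum>s\<in>sign_mats n d. \<Prod>t<d. g (s (j,t))) = real (card (sign_mats n d)) * ((g (-1) + g 1)/2)^d"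
proof -
  define I where "I = {..<n} \<times> {..<d}"
  define f where "f p y = (if fst p = j then g y else 1)/2" for p :: "nat \<times> nat" and y
  have finI: "finite I" unfolding I_def by simp
  have "(\<Prod>p\<in>I. \<Sum>y\<in>{-1,1::real}. f p y) = (\<Sum>s\<in>PiE I (\<lambda>_. {-1,1::real}). \<Prod>p\<in>I. f p (s p))"
    by (rule prod_sum_PiE) (use finI in auto)
  moreover have "(\<Sum>y\<in>{-1,1::real}. f p y) = (if fst p = j then (g (-1) + g 1)/2 else 1)" for p
    unfolding f_def by (auto simp: add_divide_distrib)
  moreover have filt: "{p\<in>I. fst p = j} = (\<lambda>t. (j,t)) ` {..<d}" unfolding I_def using j by auto
  moreover have inj: "inj_on (\<lambda>t. (j,t)) {..<d}" by (auto simp: inj_on_def)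
  moreover have "(\<Prod>p\<in>I. (if fst p = j then m else 1)) = m ^ d" for m :: real
  proof -
    have "(\<Prod>p\<in>I. (if fst p = j then m else 1)) = (\<Prod>p\<in>{p\<in>I. fst p = j}. m)"
      using prod.inter_filter[OF finI, of "\<lambda>_. m" "\<lambda>p. fst p = j"] by simp
    also have "\<dots> = m ^ d" unfolding filt using inj by (simp add: card_image)
    finally show ?thesis .
  qed
  moreover have "(\<Prod>p\<in>I. f p (s p)) = (\<Prod>t<d. g (s (j,t))) / 2^(n*d)" for s
  proof -
    have "(\<Prod>p\<in>I. f p (s p)) = (\<Prod>p\<in>I. (if fst p = j then g (s p) else 1)) / (\<Prod>p\<in>I. 2)"
      unfolding f_def by (rule prod_dividef)
    also have "(\<Prod>p\<in>I. (if fst p = j then g (s p) else 1)) = (\<Prod>p\<in>{p\<in>I. fst p = j}. g (s p))"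
      using prod.inter_filter[OF finI, of "\<lambda>p. g (s p)" "\<lambda>p. fst p = j"] by simp
    also have "\<dots> = (\<Prod>t<d. g (s (j,t)))" unfolding filt using inj by (simp add: prod.reindex)
    also have "(\<Prod>p\<in>I. (2::real)) = 2^(n*d)" unfolding I_def by (simp add: card_cartesian_product)
    finally show ?thesis .
  qed
  ultimately have "((g (-1) + g 1)/2)^d = (\<Sum>s\<in>sign_mats n d. (\<Prod>t<d. g (s (j,t))) / 2^(n*d))"
    unfolding sign_mats_def I_def by simp
  also have "\<dots> = (\<Sum>s\<in>sign_mats n d. \<Prod>t<d. g (s (j,t))) / 2^(n*d)"
    by (simp add: sum_divide_distrib)
  finally show ?thesis unfolding sign_mats_card by (simp add: field_simps)
qed

definition tau :: "nat \<Rightarrow> nat \<Rightarrow> nat \<Rightarrow> (nat \<times> nat \<Rightarrow> real) \<Rightarrow> (nat \<times> nat \<Rightarrow> real)" where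
  "tau d i j s = (\<lambda>p. if fst p = j \<and> snd p < d then s (i, snd p) * s p else s p)"

lemma tau_in:
  assumes s: "s \<in> sign_mats n d" and ij: "i < n" "j < n"
  shows "tau d i j s \<in> sign_mats n d"
proof -
  have h1: "tau d i j s p \<in> {-1,1}" if p: "p \<in> {..<n} \<times> {..<d}" for p
  proof -
    obtain a b where ab: "p = (a,b)" by fastforce
    then have "a < n" "b < d" using p by auto
    then have "s (i,b) = -1 \<or> s (i,b) = 1" "s (a,b) = -1 \<or> s (a,b) = 1"
      using sign_val[OF s ij(1)] sign_val[OF s] by auto
    then show ?thesis unfolding ab tau_def by auto
  qed
  have h2: "tau d i j s p = undefined" if p: "p \<notin> {..<n} \<times> {..<d}" for p
  proof -
    have nc: "\<not> (fst p = j \<and> snd p < d)" using p ij by (cases p) auto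
    have "tau d i j s p = s p" unfolding tau_def by (rule if_not_P[OF nc])
    then show ?thesis using sign_out[OF s p] by simp
  qed
  show ?thesis unfolding sign_mats_def PiE_iff extensional_def mem_Collect_eq using h1 h2 by blast
qed

lemma tau_tau:
  assumes s: "s \<in> sign_mats n d" and ij: "i < n" "j < n" "i \<noteq> j"
  shows "tau d i j (tau d i j s) = s"
proof
  fix p :: "nat \<times> nat"
  obtain a b where ab: "p = (a,b)" by fastforce
  show "tau d i j (tau d i j s) p = s p"
  proof (cases "a = j \<and> b < d")
    case True
    then have "s (i,b) * s (i,b) = 1" using sign_sq[OF s ij(1)] by simp
    then show ?thesis unfolding ab tau_def using True ij(3) by (simp add: mult.assoc[symmetric])
  next
    case False
    then show ?thesis unfolding ab tau_def by auto
  qed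
qed

lemma tau_bij:
  assumes ij: "i < n" "j < n" "i \<noteq> j"
  shows "bij_betw (tau d i j) (sign_mats n d) (sign_mats n d)"
  by (rule bij_betw_byWitness[where f' = "tau d i j"]) (use tau_tau[OF _ ij] tau_in[OF _ ij(1,2)] in auto)

lemma XX_tau:
  assumes s: "s \<in> sign_mats n d" and ij: "i < n" "j < n" "i \<noteq> j"
  shows "XX d (tau d i j s) i j = (\<Sum>t<d. s (j,t))"
  unfolding XX_def
proof (rule sum.cong)
  fix t assume "t \<in> {..<d}"
  then have "s (i,t) * s (i,t) = 1" using sign_sq[OF s ij(1)] by simp
  then show "tau d i j s (i, t) * tau d i j s (j, t) = s (j, t)"
    unfolding tau_def using ij(3) \<open>t \<in> {..<d}\<close> by (simp add: mult.assoc[symmetric])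
qed simp

lemma XX_tau_other:
  assumes "k \<noteq> j" "l \<noteq> j"
  shows "XX d (tau d i j s) k l = XX d s k l"
  unfolding XX_def tau_def using assms by simp

lemma mgf:
  assumes ij: "i < n" "j < n" "i \<noteq> j"
  shows "(\<Sum>s\<in>sign_mats n d. exp (c * XX d s i j)) = real (card (sign_mats n d)) * cosh c ^ d"
proof -
  have "(\<Sum>s\<in>sign_mats n d. exp (c * XX d s i j)) = (\<Sum>s\<in>sign_mats n d. exp (c * XX d (tau d i j s) i j))"
    by (rule sum.reindex_bij_betw[OF tau_bij[OF ij], symmetric])
  also have "\<dots> = (\<Sum>s\<in>sign_mats n d. \<Prod>t<d. exp (c * s (j,t)))"
  proof (rule sum.cong)
    fix s assume s: "s \<in> sign_mats n d"
    show "exp (c * XX d (tau d i j s) i j) = (\<Prod>t<d. exp (c * s (j,t)))"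
      unfolding XX_tau[OF s ij] by (simp add: sum_distrib_left exp_sum)
  qed simp
  also have "\<dots> = real (card (sign_mats n d)) * ((exp (c * -1) + exp (c * 1))/2)^d"
    by (rule row_prod_sum[OF ij(2)])
  also have "(exp (c * -1) + exp (c * 1))/2 = cosh c" by (simp add: cosh_field_def)
  finally show ?thesis .
qed

lemma indepL:
  fixes F G :: "('a \<Rightarrow> 'b) \<Rightarrow> real"
  assumes finI: "finite I" and finB: "\<And>p. p \<in> I \<Longrightarrow> finite (B p)" and AI: "A \<subseteq> I"
    and Fdep: "\<And>s s'. (\<forall>p\<in>A. s p = s' p) \<Longrightarrow> F s = F s'"
    and Gdep: "\<And>s s'. (\<forall>p\<in>I - A. s p = s' p) \<Longrightarrow> G s = G s'"
  shows "real (card (PiE I B)) * (\<Sum>s\<in>PiE I B. F s * G s) = (\<Sum>s\<in>PiE I B. F s) * (\<Sum>s\<in>PiE I B. G s)"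
proof -
  define OA where "OA = PiE A B"
  define OC where "OC = PiE (I - A) B"
  define mg where "mg = (\<lambda>(u::'a\<Rightarrow>'b, w::'a\<Rightarrow>'b). (\<lambda>p. if p \<in> A then u p else w p))"
  define sp where "sp = (\<lambda>s::'a\<Rightarrow>'b. (restrict s A, restrict s (I - A)))"
  have bij: "bij_betw mg (OA \<times> OC) (PiE I B)"
  proof (rule bij_betw_byWitness[where f' = sp])
    show "\<forall>a\<in>OA \<times> OC. sp (mg a) = a"
    proof
      fix a assume a: "a \<in> OA \<times> OC"
      obtain u w where uw: "a = (u,w)" by fastforce
      have u: "u \<in> PiE A B" and w: "w \<in> PiE (I - A) B" using a uw OA_def OC_def by auto
      have "restrict (\<lambda>p. if p \<in> A then u p else w p) A = u"
        using u by (auto simp: restrict_def PiE_iff extensional_def)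
      moreover have "restrict (\<lambda>p. if p \<in> A then u p else w p) (I - A) = w"
        using w by (auto simp: restrict_def PiE_iff extensional_def)
      ultimately show "sp (mg a) = a" unfolding sp_def mg_def uw by simp
    qed
    show "\<forall>a'\<in>PiE I B. mg (sp a') = a'"
    proof
      fix s assume s: "s \<in> PiE I B"
      show "mg (sp s) = s"
      proof
        fix p show "mg (sp s) p = s p"
          using s AI unfolding mg_def sp_def by (auto simp: restrict_def PiE_iff extensional_def)
      qed
    qed
    show "mg ` (OA \<times> OC) \<subseteq> PiE I B"
      using AI unfolding mg_def OA_def OC_def by (auto simp: PiE_iff extensional_def)
    show "sp ` PiE I B \<subseteq> OA \<times> OC"
      using AI unfolding sp_def OA_def OC_def by (auto simp: PiE_iff)
  qed
  define f where "f u = F (mg (u, \<lambda>_. undefined))" for u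
  define g where "g w = G (mg (\<lambda>_. undefined, w))" for w
  have Fmg: "F (mg (u,w)) = f u" for u w unfolding f_def by (rule Fdep) (auto simp: mg_def)
  have Gmg: "G (mg (u,w)) = g w" for u w unfolding g_def by (rule Gdep) (auto simp: mg_def)
  have finA: "finite OA" unfolding OA_def using finI finB AI by (intro finite_PiE) (auto intro: finite_subset)
  have finC: "finite OC" unfolding OC_def using finI finB by (intro finite_PiE) auto
  have sumeq: "(\<Sum>s\<in>PiE I B. H s) = (\<Sum>u\<in>OA. \<Sum>w\<in>OC. H (mg (u,w)))" for H :: "('a \<Rightarrow> 'b) \<Rightarrow> real"
  proof -
    have "(\<Sum>s\<in>PiE I B. H s) = (\<Sum>x\<in>OA \<times> OC. H (mg x))"
      by (rule sum.reindex_bij_betw[OF bij, symmetric])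
    also have "\<dots> = (\<Sum>u\<in>OA. \<Sum>w\<in>OC. H (mg (u,w)))"
      by (simp add: sum.cartesian_product split_def)
    finally show ?thesis .
  qed
  have cardeq: "card (PiE I B) = card OA * card OC"
    using bij_betw_same_card[OF bij] by (simp add: card_cartesian_product)
  have "(\<Sum>s\<in>PiE I B. F s * G s) = (\<Sum>u\<in>OA. f u) * (\<Sum>w\<in>OC. g w)"
    unfolding sumeq Fmg Gmg by (simp add: sum_product)
  moreover have "(\<Sum>s\<in>PiE I B. F s) = real (card OC) * (\<Sum>u\<in>OA. f u)"
    unfolding sumeq Fmg by (simp add: sum_distrib_left)
  moreover have "(\<Sum>s\<in>PiE I B. G s) = real (card OA) * (\<Sum>w\<in>OC. g w)"
    unfolding sumeq Gmg by (simp add: sum.swap[of _ OA OC] sum_distrib_left)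
  ultimately show ?thesis unfolding cardeq by (simp add: algebra_simps)
qed



lemma hh_sq_le: "hh x ^ 2 \<le> exp (4*x) + exp (-(4*x)) + 2"
proof -
  have h0: "0 \<le> hh x" by (rule hh_nonneg)
  have "hh x ^ 2 \<le> (hh x + 2)^2" using h0 by (intro power_mono) auto
  also have "(hh x + 2)^2 = exp (4*x) + exp (-(4*x)) + 2"
  proof -
    have "(hh x + 2) = exp (2*x) + exp (-(2*x))" unfolding hh_def by simp
    moreover have "exp (2*x) * exp (2*x) = exp (4*x)" by (simp add: exp_add[symmetric])
    moreover have "exp (-(2*x)) * exp (-(2*x)) = exp (-(4*x))" by (simp add: exp_add[symmetric])
    moreover have "exp (2*x) * exp (-(2*x)) = 1" by (simp add: exp_add[symmetric])
    ultimately show ?thesis by (simp add: power2_eq_square algebra_simps)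
  qed
  finally show ?thesis .
qed

definition m1 :: "nat \<Rightarrow> real \<Rightarrow> real" where "m1 d a = 2 * cosh (2*a) ^ d - 2"
definition m2 :: "nat \<Rightarrow> real \<Rightarrow> real" where "m2 d a = 2 * cosh (4*a) ^ d + 2"

lemma m1_nonneg: "0 \<le> m1 d a"
proof -
  have "1 \<le> cosh (2*a) ^ d" using cosh_real_ge_1 by (simp add: one_le_power)
  then show ?thesis unfolding m1_def by simp
qed

lemma m2_nonneg: "0 \<le> m2 d a" unfolding m2_def by simp

lemma Y_sum:
  assumes ij: "i < n" "j < n" "i \<noteq> j"
  shows "(\<Sum>s\<in>sign_mats n d. hh (a * XX d s i j)) = real (card (sign_mats n d)) * m1 d a"
proof -
  have "(\<Sum>s\<in>sign_mats n d. hh (a * XX d s i j)) =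
        (\<Sum>s\<in>sign_mats n d. exp ((2*a) * XX d s i j) + exp ((-(2*a)) * XX d s i j) - 2)"
    unfolding hh_def by (intro sum.cong) (simp_all add: mult.assoc)
  also have "\<dots> = (\<Sum>s\<in>sign_mats n d. exp ((2*a) * XX d s i j)) + (\<Sum>s\<in>sign_mats n d. exp ((-(2*a)) * XX d s i j))
       - (\<Sum>s\<in>sign_mats n d. 2)"
    by (simp only: sum.distrib sum_subtractf)
  also have "\<dots> = real (card (sign_mats n d)) * cosh (2*a) ^ d + real (card (sign_mats n d)) * cosh (-(2*a)) ^ d
       - 2 * real (card (sign_mats n d))"
    unfolding mgf[OF ij] by simp
  finally show ?thesis unfolding m1_def by (simp add: algebra_simps)
qed

lemma Y_sq_sum:
  assumes ij: "i < n" "j < n" "i \<noteq> j"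
  shows "(\<Sum>s\<in>sign_mats n d. hh (a * XX d s i j)^2) \<le> real (card (sign_mats n d)) * m2 d a"
proof -
  have "(\<Sum>s\<in>sign_mats n d. hh (a * XX d s i j)^2) \<le>
        (\<Sum>s\<in>sign_mats n d. exp ((4*a) * XX d s i j) + exp ((-(4*a)) * XX d s i j) + 2)"
    by (intro sum_mono order_trans[OF hh_sq_le]) (simp add: mult.assoc)
  also have "\<dots> = (\<Sum>s\<in>sign_mats n d. exp ((4*a) * XX d s i j)) + (\<Sum>s\<in>sign_mats n d. exp ((-(4*a)) * XX d s i j))
       + (\<Sum>s\<in>sign_mats n d. 2)"
    by (simp only: sum.distrib)
  also have "\<dots> = real (card (sign_mats n d)) * cosh (4*a) ^ d + real (card (sign_mats n d)) * cosh (-(4*a)) ^ d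
       + 2 * real (card (sign_mats n d))"
    unfolding mgf[OF ij] by simp
  finally show ?thesis unfolding m2_def by (simp add: algebra_simps)
qed

lemma Y_disj:
  assumes ij: "i < n" "j < n" "i \<noteq> j" and kl: "k < n" "l < n" "k \<noteq> l"
    and disj: "k \<noteq> i" "k \<noteq> j" "l \<noteq> i" "l \<noteq> j"
  shows "(\<Sum>s\<in>sign_mats n d. hh (a * XX d s i j) * hh (a * XX d s k l)) = real (card (sign_mats n d)) * m1 d a ^ 2"
proof -
  define I where "I = {..<n} \<times> {..<d}"
  define A where "A = {i,j} \<times> {..<d}"
  have eqO: "sign_mats n d = PiE I (\<lambda>_. {-1,1})" unfolding sign_mats_def I_def ..
  have AI: "A \<subseteq> I" unfolding A_def I_def using ij by auto
  have L: "real (card (PiE I (\<lambda>_. {-1,1::real}))) * (\<Sum>s\<in>PiE I (\<lambda>_. {-1,1}). hh (a * XX d s i j) * hh (a * XX d s k l))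
     = (\<Sum>s\<in>PiE I (\<lambda>_. {-1,1}). hh (a * XX d s i j)) * (\<Sum>s\<in>PiE I (\<lambda>_. {-1,1}). hh (a * XX d s k l))"
  proof (rule indepL[OF _ _ AI])
    show "finite I" unfolding I_def by simp
    show "finite {-1,1::real}" by simp
    fix s s' :: "nat \<times> nat \<Rightarrow> real"
    {
      assume h: "\<forall>p\<in>A. s p = s' p"
      have "XX d s i j = XX d s' i j" unfolding XX_def
        by (rule sum.cong) (use h in \<open>auto simp: A_def\<close>)
      then show "hh (a * XX d s i j) = hh (a * XX d s' i j)" by simp
    }
    {
      assume h: "\<forall>p\<in>I - A. s p = s' p"
      have "XX d s k l = XX d s' k l" unfolding XX_def
        by (rule sum.cong) (use h kl disj in \<open>auto simp: A_def I_def\<close>)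
      then show "hh (a * XX d s k l) = hh (a * XX d s' k l)" by simp
    }
  qed
  have pos: "real (card (sign_mats n d)) > 0"
    using sign_mats_finite sign_mats_ne by (simp add: card_gt_0_iff)
  from L[folded eqO] have "real (card (sign_mats n d)) * (\<Sum>s\<in>sign_mats n d. hh (a * XX d s i j) * hh (a * XX d s k l))
     = (real (card (sign_mats n d)) * m1 d a) * (real (card (sign_mats n d)) * m1 d a)"
    unfolding Y_sum[OF ij] Y_sum[OF kl] .
  then show ?thesis using pos by (simp add: power2_eq_square algebra_simps)
qed

lemma Y_any:
  assumes ij: "i < n" "j < n" "i \<noteq> j" and kl: "k < n" "l < n" "k \<noteq> l"
  shows "(\<Sum>s\<in>sign_mats n d. hh (a * XX d s i j) * hh (a * XX d s k l)) \<le> real (card (sign_mats n d)) * m2 d a"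
proof -
  have "(\<Sum>s\<in>sign_mats n d. hh (a * XX d s i j) * hh (a * XX d s k l)) \<le>
        (\<Sum>s\<in>sign_mats n d. (hh (a * XX d s i j)^2 + hh (a * XX d s k l)^2) / 2)"
  proof (rule sum_mono)
    fix s
    have "0 \<le> (hh (a * XX d s i j) - hh (a * XX d s k l))^2" by simp
    then show "hh (a * XX d s i j) * hh (a * XX d s k l) \<le> (hh (a * XX d s i j)^2 + hh (a * XX d s k l)^2) / 2"
      by (simp add: power2_eq_square algebra_simps)
  qed
  also have "\<dots> = ((\<Sum>s\<in>sign_mats n d. hh (a * XX d s i j)^2) + (\<Sum>s\<in>sign_mats n d. hh (a * XX d s k l)^2)) / 2"
    by (simp add: sum_divide_distrib[symmetric] sum.distrib)
  also have "\<dots> \<le> (real (card (sign_mats n d)) * m2 d a + real (card (sign_mats n d)) * m2 d a) / 2"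
    using Y_sq_sum[OF ij, where d=d and a=a] Y_sq_sum[OF kl, where d=d and a=a] by (intro divide_right_mono add_mono) auto
  finally show ?thesis by (simp add: mult.commute)
qed

definition Off :: "nat \<Rightarrow> (nat \<times> nat) set" where
  "Off n = {p \<in> {..<n} \<times> {..<n}. fst p \<noteq> snd p}"

definition GG :: "nat \<Rightarrow> nat \<Rightarrow> real \<Rightarrow> (nat \<times> nat \<Rightarrow> real) \<Rightarrow> real" where
  "GG n d a s = (\<Sum>p\<in>Off n. hh (a * XX d s (fst p) (snd p)))"

lemma Off_finite: "finite (Off n)" unfolding Off_def by simp

lemma Off_sub: "Off n \<subseteq> {..<n} \<times> {..<n}" unfolding Off_def by auto

lemma G_sum: "(\<Sum>s\<in>sign_mats n d. GG n d a s) = real (card (sign_mats n d)) * (m1 d a * real (card (Off n)))"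
proof -
  have "(\<Sum>s\<in>sign_mats n d. GG n d a s) = (\<Sum>p\<in>Off n. \<Sum>s\<in>sign_mats n d. hh (a * XX d s (fst p) (snd p)))"
    unfolding GG_def by (rule sum.swap)
  also have "\<dots> = (\<Sum>p\<in>Off n. real (card (sign_mats n d)) * m1 d a)"
    by (rule sum.cong) (auto simp: Off_def intro!: Y_sum)
  finally show ?thesis by simp
qed

lemma ind_sum:
  assumes "i < n"
  shows "(\<Sum>q\<in>{..<n} \<times> {..<n}. if i = fst q then 1 else 0 :: real) = real n"
    and "(\<Sum>q\<in>{..<n} \<times> {..<n}. if i = snd q then 1 else 0 :: real) = real n"
proof -
  have fin: "finite ({..<n} \<times> {..<n})" by simp
  have "(\<Sum>q\<in>{..<n} \<times> {..<n}. if i = fst q then 1 else 0 :: real) = card {q\<in>{..<n} \<times> {..<n}. i = fst q}"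
    using sum.inter_filter[OF fin, of "\<lambda>_. 1::real" "\<lambda>q. i = fst q"] by simp
  also have "{q\<in>{..<n} \<times> {..<n}. i = fst q} = {i} \<times> {..<n}" using assms by auto
  finally show "(\<Sum>q\<in>{..<n} \<times> {..<n}. if i = fst q then 1 else 0 :: real) = real n"
    by (simp add: card_cartesian_product)
  have "(\<Sum>q\<in>{..<n} \<times> {..<n}. if i = snd q then 1 else 0 :: real) = card {q\<in>{..<n} \<times> {..<n}. i = snd q}"
    using sum.inter_filter[OF fin, of "\<lambda>_. 1::real" "\<lambda>q. i = snd q"] by simp
  also have "{q\<in>{..<n} \<times> {..<n}. i = snd q} = {..<n} \<times> {i}" using assms by auto
  finally show "(\<Sum>q\<in>{..<n} \<times> {..<n}. if i = snd q then 1 else 0 :: real) = real n"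
    by (simp add: card_cartesian_product)
qed

definition ind :: "nat \<times> nat \<Rightarrow> nat \<times> nat \<Rightarrow> real" where
  "ind p q = (if fst p = fst q then 1 else 0) + (if fst p = snd q then 1 else 0)
           + (if snd p = fst q then 1 else 0) + (if snd p = snd q then 1 else 0)"

lemma ind_nonneg: "0 \<le> ind p q" unfolding ind_def by simp

lemma ind_total: "(\<Sum>p\<in>Off n. \<Sum>q\<in>Off n. ind p q) \<le> 4 * real n ^ 3"
proof -
  have "(\<Sum>p\<in>Off n. \<Sum>q\<in>Off n. ind p q) \<le> (\<Sum>p\<in>Off n. \<Sum>q\<in>{..<n} \<times> {..<n}. ind p q)"
    by (intro sum_mono sum_mono2 Off_sub ind_nonneg) auto
  also have "\<dots> \<le> (\<Sum>p\<in>{..<n} \<times> {..<n}. \<Sum>q\<in>{..<n} \<times> {..<n}. ind p q)"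
    by (intro sum_mono2 Off_sub sum_nonneg ind_nonneg) auto
  also have "\<dots> = (\<Sum>p\<in>{..<n} \<times> {..<n}. 4 * real n)"
  proof (rule sum.cong)
    fix p assume p: "p \<in> {..<n} \<times> {..<n}"
    then have "fst p < n" "snd p < n" by auto
    then show "(\<Sum>q\<in>{..<n} \<times> {..<n}. ind p q) = 4 * real n"
      unfolding ind_def using ind_sum[of "fst p" n] ind_sum[of "snd p" n]
      by (simp add: sum.distrib)
  qed simp
  also have "\<dots> = 4 * real n ^ 3" by (simp add: card_cartesian_product power3_eq_cube)
  finally show ?thesis .
qed

lemma G_sq_sum:
  "(\<Sum>s\<in>sign_mats n d. GG n d a s ^ 2) \<le>
     real (card (sign_mats n d)) * (m1 d a * real (card (Off n)))^2 + real (card (sign_mats n d)) * m2 d a * (4 * real n ^ 3)"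
proof -
  let ?N = "real (card (sign_mats n d))"
  let ?Y = "\<lambda>p s. hh (a * XX d s (fst p) (snd p))"
  have "(\<Sum>s\<in>sign_mats n d. GG n d a s ^ 2) = (\<Sum>s\<in>sign_mats n d. \<Sum>p\<in>Off n. \<Sum>q\<in>Off n. ?Y p s * ?Y q s)"
    unfolding GG_def power2_eq_square sum_product ..
  also have "\<dots> = (\<Sum>p\<in>Off n. \<Sum>q\<in>Off n. \<Sum>s\<in>sign_mats n d. ?Y p s * ?Y q s)"
    by (subst sum.swap) (simp add: sum.swap[of _ "sign_mats n d"])
  also have "\<dots> \<le> (\<Sum>p\<in>Off n. \<Sum>q\<in>Off n. ?N * m1 d a ^ 2 + ?N * m2 d a * ind p q)"
  proof (intro sum_mono)
    fix p q assume p: "p \<in> Off n" and q: "q \<in> Off n"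
    obtain i j where pij: "p = (i,j)" by fastforce
    obtain k l where qkl: "q = (k,l)" by fastforce
    have ij: "i < n" "j < n" "i \<noteq> j" using p pij by (auto simp: Off_def)
    have kl: "k < n" "l < n" "k \<noteq> l" using q qkl by (auto simp: Off_def)
    have N0: "0 \<le> ?N" by simp
    show "(\<Sum>s\<in>sign_mats n d. ?Y p s * ?Y q s) \<le> ?N * m1 d a ^ 2 + ?N * m2 d a * ind p q"
    proof (cases "k \<noteq> i \<and> k \<noteq> j \<and> l \<noteq> i \<and> l \<noteq> j")
      case True
      then have "(\<Sum>s\<in>sign_mats n d. ?Y p s * ?Y q s) = ?N * m1 d a ^ 2"
        unfolding pij qkl using Y_disj[OF ij kl] by simp
      moreover have "0 \<le> ?N * m2 d a * ind p q" using N0 m2_nonneg ind_nonneg by simp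
      ultimately show ?thesis by simp
    next
      case False
      then have "1 \<le> ind p q" unfolding pij qkl ind_def by auto
      then have "?N * m2 d a * 1 \<le> ?N * m2 d a * ind p q"
        by (intro mult_left_mono) (use N0 m2_nonneg[of d a] in auto)
      moreover have "(\<Sum>s\<in>sign_mats n d. ?Y p s * ?Y q s) \<le> ?N * m2 d a"
        unfolding pij qkl using Y_any[OF ij kl] by simp
      moreover have "0 \<le> ?N * m1 d a ^ 2" using N0 by simp
      ultimately show ?thesis by linarith
    qed
  qed
  also have "\<dots> = ?N * m1 d a ^ 2 * real (card (Off n))^2 + ?N * m2 d a * (\<Sum>p\<in>Off n. \<Sum>q\<in>Off n. ind p q)"
    by (simp add: sum.distrib sum_distrib_left power2_eq_square)
  also have "\<dots> \<le> ?N * m1 d a ^ 2 * real (card (Off n))^2 + ?N * m2 d a * (4 * real n ^ 3)"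
    using ind_total[of n] m2_nonneg[of d a] by (intro add_left_mono mult_left_mono) auto
  finally show ?thesis by (simp add: power_mult_distrib)
qed

lemma G_var:
  "(\<Sum>s\<in>sign_mats n d. (GG n d a s - m1 d a * real (card (Off n)))^2) \<le>
     real (card (sign_mats n d)) * m2 d a * (4 * real n ^ 3)"
proof -
  let ?N = "real (card (sign_mats n d))"
  let ?mu = "m1 d a * real (card (Off n))"
  have "(\<Sum>s\<in>sign_mats n d. (GG n d a s - ?mu)^2) =
        (\<Sum>s\<in>sign_mats n d. GG n d a s ^ 2 - (2 * ?mu) * GG n d a s + ?mu^2)"
    by (rule sum.cong) (simp_all add: power2_diff algebra_simps)
  also have "\<dots> = (\<Sum>s\<in>sign_mats n d. GG n d a s ^ 2) - 2 * ?mu * (\<Sum>s\<in>sign_mats n d. GG n d a s) + ?N * ?mu^2"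
    by (simp add: sum.distrib sum_subtractf sum_distrib_left)
  also have "\<dots> = (\<Sum>s\<in>sign_mats n d. GG n d a s ^ 2) - ?N * ?mu^2"
    unfolding G_sum by (simp add: power2_eq_square)
  also have "\<dots> \<le> ?N * m2 d a * (4 * real n ^ 3)"
    using G_sq_sum[of n d a] by simp
  finally show ?thesis .
qed

lemma chebyshev_fin:
  fixes F :: "'a \<Rightarrow> real"
  assumes "finite S" "t > 0"
  shows "real (card {s\<in>S. mu + t < F s}) * t^2 \<le> (\<Sum>s\<in>S. (F s - mu)^2)"
proof -
  have "real (card {s\<in>S. mu + t < F s}) * t^2 = (\<Sum>s\<in>{s\<in>S. mu + t < F s}. t^2)" by simp
  also have "\<dots> \<le> (\<Sum>s\<in>{s\<in>S. mu + t < F s}. (F s - mu)^2)"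
  proof (rule sum_mono)
    fix s assume "s \<in> {s\<in>S. mu + t < F s}"
    then have "t \<le> F s - mu" by simp
    then show "t^2 \<le> (F s - mu)^2" using assms(2) by (intro power_mono) auto
  qed
  also have "\<dots> \<le> (\<Sum>s\<in>S. (F s - mu)^2)"
    using assms(1) by (intro sum_mono2) auto
  finally show ?thesis .
qed

lemma G_tail:
  assumes T: "T > 0" "4 * m2 d a \<le> T^2" and n: "n > 0"
  shows "real (card {s\<in>sign_mats n d. m1 d a * real (card (Off n)) + T * real n ^ 2 < GG n d a s})
          \<le> real (card (sign_mats n d)) / real n"
proof -
  let ?N = "real (card (sign_mats n d))"
  let ?C = "real (card {s\<in>sign_mats n d. m1 d a * real (card (Off n)) + T * real n ^ 2 < GG n d a s})"
  have tpos: "T * real n ^ 2 > 0" using T n by simp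
  have "?C * (T * real n ^ 2)^2 \<le> ?N * m2 d a * (4 * real n ^ 3)"
    using chebyshev_fin[OF sign_mats_finite[of n d] tpos, where mu = "m1 d a * real (card (Off n))" and F = "GG n d a"] G_var[of n d a]
    by linarith
  also have "\<dots> \<le> ?N * T^2 * real n ^ 3"
  proof -
    have "4 * m2 d a * real n^3 \<le> T^2 * real n^3" by (rule mult_right_mono) (use T(2) in auto)
    then have "?N * (4 * m2 d a * real n^3) \<le> ?N * (T^2 * real n^3)" by (intro mult_left_mono) auto
    then show ?thesis by (simp add: algebra_simps)
  qed
  finally have ineq: "?C * (T * real n ^ 2)^2 \<le> ?N * T^2 * real n ^ 3" .
  have e: "(T * real n^2)^2 = (T^2 * real n^3) * real n" by (simp add: power2_eq_square power3_eq_cube)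
  have pos: "T^2 * real n^3 > 0" using T n by simp
  from ineq have "(?C * real n) * (T^2 * real n^3) \<le> ?N * (T^2 * real n^3)" unfolding e by (simp add: algebra_simps)
  then have "?C * real n \<le> ?N" using pos by (simp add: mult_le_cancel_right)
  then show ?thesis using n by (simp add: pos_le_divide_eq)
qed



lemma kernel_eq:
  assumes "0 \<le> r"
  shows "kernel_M d r s i j = exp ((r / real d) * XX d s i j)"
proof -
  have "sqrt (r / real d) * sqrt (r / real d) = r / real d" using assms by simp
  then show ?thesis unfolding kernel_M_def rand_Q_def XX_def
    using assms by (simp add: sum_distrib_left algebra_simps)
qed

lemma Off_sum: "(\<Sum>p\<in>Off n. f p) = (\<Sum>i<n. \<Sum>j<n. if i \<noteq> j then f (i,j) else 0)"
proof -
  have "(\<Sum>p\<in>Off n. f p) = (\<Sum>p\<in>{..<n}\<times>{..<n}. if fst p \<noteq> snd p then f p else 0)"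
    unfolding Off_def by (rule sum.inter_filter) simp
  also have "\<dots> = (\<Sum>i<n. \<Sum>j<n. if i \<noteq> j then f (i,j) else 0)"
    unfolding sum.cartesian_product by (rule sum.cong) auto
  finally show ?thesis .
qed

lemma D_sum: "(\<Sum>p\<in>{..<n}\<times>{..<n}. f p) = (\<Sum>i<n. \<Sum>j<n. f (i,j))"
  unfolding sum.cartesian_product by (rule sum.cong) auto

lemma card_Off: "real (card (Off n)) = real n ^ 2 - real n"
proof -
  have eq: "Off n = {..<n}\<times>{..<n} - (\<lambda>i. (i,i)) ` {..<n}" unfolding Off_def by auto
  have sub: "(\<lambda>i. (i,i)) ` {..<n} \<subseteq> {..<n}\<times>{..<n}" by auto
  have ci: "card ((\<lambda>i. (i,i)) ` {..<n}) = n" by (simp add: card_image inj_on_def)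
  have "card (Off n) = n * n - n" unfolding eq
    by (subst card_Diff_subset) (use sub ci in \<open>auto simp: card_cartesian_product\<close>)
  moreover have "n \<le> n * n" by (cases n) auto
  ultimately show ?thesis by (simp add: of_nat_diff power2_eq_square)
qed

lemma card_Off_le: "real (card (Off n)) \<le> real n ^ 2"
  using card_Off[of n] by simp

lemma XX_total:
  assumes s: "s \<in> sign_mats n d"
  shows "(\<Sum>p\<in>Off n. XX d s (fst p) (snd p)) \<ge> - (real n * real d)"
proof -
  have tot: "(\<Sum>i<n. \<Sum>j<n. XX d s i j) \<ge> 0"
  proof -
    have "(\<Sum>i<n. \<Sum>j<n. XX d s i j) = (\<Sum>t<d. (\<Sum>i<n. s (i,t)) * (\<Sum>j<n. s (j,t)))"
      unfolding XX_def sum_product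
      by (simp add: sum.swap[of _ "{..<n}" "{..<d}"] sum.swap[of _ "{..<n}" "{..<d}"])
    also have "\<dots> \<ge> 0" by (intro sum_nonneg) (simp add: power2_eq_square[symmetric])
    finally show ?thesis .
  qed
  have split: "(\<Sum>i<n. \<Sum>j<n. XX d s i j) = (\<Sum>i<n. \<Sum>j<n. if i \<noteq> j then XX d s i j else 0) + (\<Sum>i<n. XX d s i i)"
  proof -
    have "(\<Sum>i<n. \<Sum>j<n. XX d s i j) = (\<Sum>i<n. \<Sum>j<n. (if i \<noteq> j then XX d s i j else 0) + (if i = j then XX d s i j else 0))"
      by (intro sum.cong) auto
    also have "\<dots> = (\<Sum>i<n. \<Sum>j<n. if i \<noteq> j then XX d s i j else 0) + (\<Sum>i<n. \<Sum>j<n. if i = j then XX d s i j else 0)"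
      by (simp add: sum.distrib)
    also have "(\<Sum>i<n. \<Sum>j<n. if i = j then XX d s i j else 0) = (\<Sum>i<n. XX d s i i)"
      by (intro sum.cong) (auto simp: sum.delta)
    finally show ?thesis .
  qed
  have diag: "(\<Sum>i<n. XX d s i i) = real n * real d"
    using XX_diag[OF s] by simp
  show ?thesis using tot split diag unfolding Off_sum fst_conv snd_conv by linarith
qed


lemma Gd_large:
  assumes s: "s \<in> sign_mats n d" and a: "0 \<le> a" and K: "1 \<le> K"
    and Gb: "GG n d a s \<le> K * real n ^ 2" and big: "real n > 2 * (a * real d + 1)"
  shows "real (card {p\<in>Off n. -1 \<le> a * XX d s (fst p) (snd p)}) > real n ^ 2 / (8 * K)"
proof (rule ccontr)
  define x where "x p = a * XX d s (fst p) (snd p)" for p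
  define Gd where "Gd = {p\<in>Off n. -1 \<le> x p}"
  define Bd where "Bd = {p\<in>Off n. x p < -1}"
  assume "\<not> ?thesis"
  then have Gsmall: "real (card Gd) \<le> real n ^ 2 / (8 * K)" unfolding Gd_def x_def by simp
  have finG: "finite Gd" and finB: "finite Bd" unfolding Gd_def Bd_def using Off_finite by auto
  have part: "Off n = Gd \<union> Bd" and disj: "Gd \<inter> Bd = {}" unfolding Gd_def Bd_def by auto
  have c1: "real (card (Off n)) = real (card Gd) + real (card Bd)"
    unfolding part using card_Un_disjoint[OF finG finB disj] by simp
  have s1: "(\<Sum>p\<in>Off n. x p) = (\<Sum>p\<in>Gd. x p) + (\<Sum>p\<in>Bd. x p)"
    unfolding part by (rule sum.union_disjoint[OF finG finB disj])
  have t: "(\<Sum>p\<in>Off n. x p) \<ge> - (real n * (a * real d))"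
  proof -
    have "(\<Sum>p\<in>Off n. x p) = a * (\<Sum>p\<in>Off n. XX d s (fst p) (snd p))"
      unfolding x_def by (simp add: sum_distrib_left)
    also have "\<dots> \<ge> a * (- (real n * real d))"
      using XX_total[OF s] a by (intro mult_left_mono) auto
    finally show ?thesis by (simp add: algebra_simps)
  qed
  have b: "(\<Sum>p\<in>Bd. x p) \<le> - real (card Bd)"
  proof -
    have "(\<Sum>p\<in>Bd. x p) \<le> (\<Sum>p\<in>Bd. -1)" by (rule sum_mono) (auto simp: Bd_def)
    then show ?thesis by simp
  qed
  have q: "(\<Sum>p\<in>Gd. x p ^ 2) \<le> K * real n ^ 2 / 2"
  proof -
    have "(\<Sum>p\<in>Gd. x p ^ 2) \<le> (\<Sum>p\<in>Off n. x p ^ 2)"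
      by (rule sum_mono2) (use Off_finite in \<open>auto simp: Gd_def\<close>)
    also have "\<dots> \<le> (\<Sum>p\<in>Off n. hh (x p) / 2)"
    proof (rule sum_mono)
      fix p show "x p ^ 2 \<le> hh (x p) / 2" using hh_ge_sq[of "x p"] by simp
    qed
    also have "\<dots> = GG n d a s / 2" unfolding GG_def x_def by (simp add: sum_divide_distrib)
    finally show ?thesis using Gb by simp
  qed
  have g: "(\<Sum>p\<in>Gd. x p) \<le> (\<Sum>p\<in>Gd. x p ^ 2) / (4*K) + K * real (card Gd)"
  proof -
    have "(\<Sum>p\<in>Gd. x p) \<le> (\<Sum>p\<in>Gd. x p ^ 2 / (4*K) + K)"
    proof (rule sum_mono)
      fix p
      have "0 \<le> (x p - 2*K)^2" by simp
      then have "4*K * x p \<le> x p ^ 2 + 4*K^2" by (simp add: power2_eq_square algebra_simps)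
      then show "x p \<le> x p ^ 2 / (4*K) + K" using K by (simp add: field_simps power2_eq_square)
    qed
    also have "\<dots> = (\<Sum>p\<in>Gd. x p ^ 2) / (4*K) + K * real (card Gd)"
      by (simp add: sum.distrib sum_divide_distrib)
    finally show ?thesis .
  qed
  have g2: "(\<Sum>p\<in>Gd. x p ^ 2) / (4*K) \<le> real n ^ 2 / 8"
  proof -
    have "(\<Sum>p\<in>Gd. x p ^ 2) / (4*K) \<le> (K * real n ^ 2 / 2) / (4*K)"
      using q K by (intro divide_right_mono) auto
    also have "\<dots> = real n ^ 2 / 8" using K by (simp add: field_simps)
    finally show ?thesis .
  qed
  have g3: "K * real (card Gd) \<le> real n ^ 2 / 8"
  proof -
    have "K * real (card Gd) \<le> K * (real n ^ 2 / (8 * K))" using Gsmall K by (intro mult_left_mono) auto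
    also have "\<dots> = real n ^ 2 / 8" using K by (simp add: field_simps)
    finally show ?thesis .
  qed
  have g4: "real (card Gd) \<le> real n ^ 2 / 8"
  proof -
    have "real n ^ 2 / (8 * K) \<le> real n ^ 2 / 8" using K by (intro divide_left_mono) auto
    then show ?thesis using Gsmall by linarith
  qed
  have cO: "real (card (Off n)) = real n ^ 2 - real n" by (rule card_Off)
  have npos: "real n > 0" using big a by (smt (verit) mult_nonneg_nonneg of_nat_0_le_iff)
  have key: "real n * (a * real d + 1) < real n * (real n / 2)"
    using big npos by (intro mult_strict_left_mono) auto
  have "- (real n * (a * real d)) \<le> real n ^ 2 / 8 + real n ^ 2 / 8 - (real n ^ 2 - real n - real n ^ 2 / 8)"
    using t s1 b g g2 g3 g4 c1 cO by linarith
  moreover have e1: "real n * (a*real d + 1) = real n * (a * real d) + real n" by (simp add: algebra_simps)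
  moreover have e2: "real n * (real n / 2) = real n ^ 2 / 2" by (simp add: power2_eq_square)
  moreover have "0 \<le> real n ^ 2" by simp
  ultimately show False using key by linarith
qed



lemma frob_sq:
  assumes "frob_err n A B \<le> e"
  shows "(\<Sum>i<n. \<Sum>j<n. (A i j - B i j)^2) \<le> e^2"
proof -
  let ?S = "(\<Sum>i<n. \<Sum>j<n. (A i j - B i j)^2)"
  have S0: "0 \<le> ?S" by (simp add: sum_nonneg)
  have "sqrt ?S \<le> e" using assms unfolding frob_err_def .
  then have "(sqrt ?S)^2 \<le> e^2" using S0 by (intro power_mono) auto
  then show ?thesis using S0 by simp
qed

lemma frob_entry:
  assumes "frob_err n A B \<le> e" "i < n" "j < n"
  shows "\<bar>A i j - B i j\<bar> \<le> e"
proof -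
  let ?S = "(\<Sum>i<n. \<Sum>j<n. (A i j - B i j)^2)"
  have "(A i j - B i j)^2 \<le> (\<Sum>j<n. (A i j - B i j)^2)"
    by (rule member_le_sum) (use assms in auto)
  also have "\<dots> \<le> ?S"
    by (rule member_le_sum[where f = "\<lambda>i. \<Sum>j<n. (A i j - B i j)^2"]) (use assms in \<open>auto intro: sum_nonneg\<close>)
  finally have "sqrt ((A i j - B i j)^2) \<le> sqrt ?S" by (rule real_sqrt_le_mono)
  then show ?thesis using assms(1) unfolding frob_err_def by simp
qed

definition cc :: "real \<Rightarrow> real" where "cc K = sqrt (exp (-2) / (16 * K))"

lemma sparse_lb:
  assumes s: "s \<in> sign_mats n d" and r: "0 \<le> r" and d: "real d > 0" and K: "1 \<le> K"
    and Gb: "GG n d (r / real d) s \<le> K * real n ^ 2" and big: "real n > 2 * (r + 1)"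
    and err: "frob_err n (kernel_M d r s) S \<le> cc K * real n"
  shows "real (nnz n S) \<ge> real n ^ 2 / (16 * K)"
proof (rule ccontr)
  assume "\<not> ?thesis"
  then have small: "real (nnz n S) < real n ^ 2 / (16 * K)" by simp
  define a where "a = r / real d"
  have a0: "0 \<le> a" unfolding a_def using r d by simp
  have ad: "a * real d = r" unfolding a_def using d by simp
  define x where "x p = a * XX d s (fst p) (snd p)" for p
  define Gd where "Gd = {p\<in>Off n. -1 \<le> x p}"
  define NZ where "NZ = {(i, j). i < n \<and> j < n \<and> S i j \<noteq> 0}"
  define GZ where "GZ = {p\<in>Gd. S (fst p) (snd p) = 0}"
  have big': "real n > 2 * (a * real d + 1)" using big ad by simp
  have Glarge: "real (card Gd) > real n ^ 2 / (8 * K)"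
    using Gd_large[OF s a0 K _ big'] Gb unfolding Gd_def x_def a_def by simp
  have finD: "finite ({..<n}\<times>{..<n})" by simp
  have Gsub: "Gd \<subseteq> {..<n}\<times>{..<n}" unfolding Gd_def Off_def by auto
  have finNZ: "finite NZ" by (rule finite_subset[OF _ finD]) (auto simp: NZ_def)
  have finGZ: "finite GZ" by (rule finite_subset[OF _ finD]) (use Gsub in \<open>auto simp: GZ_def\<close>)
  have "Gd \<subseteq> GZ \<union> NZ" unfolding GZ_def NZ_def using Gsub by auto
  then have "card Gd \<le> card (GZ \<union> NZ)" by (intro card_mono) (use finGZ finNZ in auto)
  also have "\<dots> \<le> card GZ + card NZ" by (rule card_Un_le)
  finally have cGZ: "real (card GZ) \<ge> real (card Gd) - real (nnz n S)" unfolding nnz_def NZ_def by simp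
  have Kpos: "K > 0" using K by simp
  have half: "real n ^ 2 / (8 * K) - real n ^ 2 / (16 * K) = real n ^ 2 / (16 * K)"
    using Kpos by (simp add: field_simps)
  have GZlarge: "real (card GZ) > real n ^ 2 / (16 * K)" using cGZ Glarge small half by linarith
  have "real (card GZ) * exp (-2) = (\<Sum>p\<in>GZ. exp (-2))" by simp
  also have "\<dots> \<le> (\<Sum>p\<in>GZ. (kernel_M d r s (fst p) (snd p) - S (fst p) (snd p))^2)"
  proof (rule sum_mono)
    fix p assume p: "p \<in> GZ"
    then have x1: "-1 \<le> x p" and S0: "S (fst p) (snd p) = 0" unfolding GZ_def Gd_def by auto
    have "kernel_M d r s (fst p) (snd p) = exp (x p)" unfolding x_def a_def using kernel_eq[OF r] by simp
    then have "(kernel_M d r s (fst p) (snd p) - S (fst p) (snd p))^2 = exp (2 * x p)"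
      using S0 by (simp add: power2_eq_square exp_add[symmetric])
    moreover have "exp (-2) \<le> exp (2 * x p)" using x1 by simp
    ultimately show "exp (-2) \<le> (kernel_M d r s (fst p) (snd p) - S (fst p) (snd p))^2" by simp
  qed
  also have "\<dots> \<le> (\<Sum>p\<in>{..<n}\<times>{..<n}. (kernel_M d r s (fst p) (snd p) - S (fst p) (snd p))^2)"
    by (rule sum_mono2[OF finD]) (use Gsub in \<open>auto simp: GZ_def\<close>)
  also have "\<dots> = (\<Sum>i<n. \<Sum>j<n. (kernel_M d r s i j - S i j)^2)" by (simp add: D_sum)
  also have "\<dots> \<le> (cc K * real n)^2" by (rule frob_sq[OF err])
  also have "\<dots> = exp (-2) / (16 * K) * real n ^ 2"
    unfolding cc_def using Kpos by (simp add: power_mult_distrib)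
  finally have "real (card GZ) * exp (-2) \<le> real n ^ 2 / (16 * K) * exp (-2)" by (simp add: field_simps)
  then have "real (card GZ) \<le> real n ^ 2 / (16 * K)" by (rule mult_right_le_imp_le) simp
  then show False using GZlarge by linarith
qed



lemma hh_le_GG:
  assumes "i < n" "j < n" "i \<noteq> j"
  shows "hh (a * XX d s i j) \<le> GG n d a s"
proof -
  have "(i,j) \<in> Off n" using assms unfolding Off_def by auto
  then have "hh (a * XX d s (fst (i,j)) (snd (i,j))) \<le> GG n d a s"
    unfolding GG_def by (intro member_le_sum) (auto simp: hh_nonneg Off_finite)
  then show ?thesis by simp
qed

lemma lowrank_lb:
  assumes s: "s \<in> sign_mats n d" and r: "0 \<le> r" and d: "real d > 0" and K: "0 \<le> K"
    and Gb: "GG n d (r / real d) s \<le> K * real n ^ 2" and diag: "exp r \<ge> real n ^ 3"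
    and n1: "1 \<le> real n" and c: "0 \<le> c" and big: "real n \<ge> sqrt (K + 2) + 2 * c + 1"
    and err: "frob_err n (kernel_M d r s) R \<le> c * real n"
  shows "n \<le> mat_rank n R"
proof (rule mat_rank_ge, intro allI impI)
  fix i assume i: "i < n"
  define a where "a = r / real d"
  define L where "L = sqrt (K + 2)"
  have L0: "0 \<le> L" unfolding L_def using K by simp
  have ad: "a * real d = r" unfolding a_def using d by simp
  have M: "kernel_M d r s k l = exp (a * XX d s k l)" for k l unfolding a_def by (rule kernel_eq[OF r])
  have ent: "\<bar>kernel_M d r s k l - R k l\<bar> \<le> c * real n" if "k < n" "l < n" for k l
    by (rule frob_entry[OF err that])
  have Rii: "\<bar>R i i\<bar> \<ge> real n ^ 3 - c * real n"
  proof -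
    have "kernel_M d r s i i = exp r" unfolding M XX_diag[OF s i] ad ..
    then show ?thesis using ent[OF i i] diag by linarith
  qed
  have Rij: "\<bar>R i j\<bar> \<le> (L + c) * real n" if j: "j \<in> {..<n} - {i}" for j
  proof -
    have jn: "j < n" "i \<noteq> j" using j by auto
    define x where "x = a * XX d s i j"
    have "exp x ^ 2 = exp (2 * x)" by (simp add: power2_eq_square exp_add[symmetric])
    also have "\<dots> \<le> exp (2 * \<bar>x\<bar>)" by simp
    also have "\<dots> \<le> hh x + 2" by (rule hh_exp_abs)
    also have "\<dots> \<le> K * real n ^ 2 + 2" using hh_le_GG[OF i jn(1) jn(2), of a d s] Gb unfolding x_def a_def by simp
    also have "\<dots> \<le> (K + 2) * real n ^ 2" using n1 by (simp add: algebra_simps)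
    also have "\<dots> = (L * real n)^2" unfolding L_def using K by (simp add: power_mult_distrib)
    finally have "exp x \<le> L * real n" by (rule power2_le_imp_le) (use L0 in simp)
    moreover have "kernel_M d r s i j = exp x" unfolding M x_def ..
    moreover have "0 < exp x" by simp
    moreover have "0 \<le> L * real n" using L0 by simp
    ultimately show ?thesis using ent[OF i jn(1)] unfolding distrib_right abs_le_iff by linarith
  qed
  have "(\<Sum>j\<in>{..<n}-{i}. \<bar>R i j\<bar>) \<le> real (card ({..<n}-{i})) * ((L + c) * real n)"
    by (rule sum_bounded_above) (rule Rij)
  also have "\<dots> \<le> real n * ((L + c) * real n)"
  proof (intro mult_right_mono)
    have "card ({..<n} - {i}) \<le> card {..<n}" by (rule card_mono) auto
    then show "real (card ({..<n} - {i})) \<le> real n" by simp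
  qed (use L0 c in auto)
  also have "\<dots> < real n ^ 3 - c * real n"
  proof -
    have "real n - L - c \<ge> c + 1" using big unfolding L_def by simp
    then have "real n * (real n - L - c) \<ge> real n * (c + 1)" using n1 by (intro mult_left_mono) auto
    moreover have "real n * (c + 1) > c" using n1 c by (smt (verit) mult_le_cancel_right1 )
    ultimately have "real n * (real n - L - c) > c" by linarith
    then have "real n * (real n * (real n - L - c)) > real n * c" using n1 by (intro mult_strict_left_mono) auto
    then show ?thesis by (simp add: power3_eq_cube algebra_simps)
  qed
  also have "\<dots> \<le> \<bar>R i i\<bar>" by (rule Rii)
  finally show "(\<Sum>j\<in>{..<n}-{i}. \<bar>R i j\<bar>) < \<bar>R i i\<bar>" .
qed

lemma upper_est:
  assumes s: "s \<in> sign_mats n d" and r: "0 \<le> r" and K: "0 \<le> K"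
    and Gb: "GG n d (r / real d) s \<le> K * real n ^ 2"
  shows "\<exists>S R. real (nnz n S + lowrank_params n R) \<le> 2 * real n \<and>
           frob_err n (kernel_M d r s) (\<lambda>i j. S i j + R i j) \<le> sqrt K * real n"
proof -
  define a where "a = r / real d"
  define M where "M = kernel_M d r s"
  define S where "S i j = (if i = j then M i j - 1 else 0)" for i j
  define R :: "nat \<Rightarrow> nat \<Rightarrow> real" where "R i j = 1" for i j
  have Mx: "M k l = exp (a * XX d s k l)" for k l unfolding a_def M_def by (rule kernel_eq[OF r])
  have nnz: "nnz n S \<le> n"
  proof -
    have "{(i, j). i < n \<and> j < n \<and> S i j \<noteq> 0} \<subseteq> (\<lambda>i. (i,i)) ` {..<n}" unfolding S_def by auto
    then have "nnz n S \<le> card ((\<lambda>i. (i,i)) ` {..<n})" unfolding nnz_def by (intro card_mono) auto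
    also have "\<dots> \<le> n" using card_image_le[of "{..<n}" "\<lambda>i. (i,i)"] by simp
    finally show ?thesis .
  qed
  have rk: "mat_rank n R \<le> 1"
    unfolding mat_rank_def
    by (rule Least_le) (rule exI[of _ "\<lambda>_ _. 1"], rule exI[of _ "\<lambda>_ _. 1"], simp add: R_def)
  have lr: "lowrank_params n R \<le> n" unfolding lowrank_params_def using rk
    by (metis mult.right_neutral mult_le_mono2)
  have "(\<Sum>i<n. \<Sum>j<n. (M i j - (S i j + R i j))^2) = (\<Sum>i<n. \<Sum>j<n. if i \<noteq> j then (exp (a * XX d s i j) - 1)^2 else 0)"
    unfolding S_def R_def Mx by (intro sum.cong) auto
  also have "\<dots> = (\<Sum>p\<in>Off n. (exp (a * XX d s (fst p) (snd p)) - 1)^2)" by (simp only: Off_sum fst_conv snd_conv)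
  also have "\<dots> \<le> GG n d a s" unfolding GG_def by (intro sum_mono hh_ge_exp1)
  also have "\<dots> \<le> K * real n ^ 2" using Gb unfolding a_def .
  finally have "frob_err n M (\<lambda>i j. S i j + R i j) \<le> sqrt (K * real n ^ 2)"
    unfolding frob_err_def by (rule real_sqrt_le_mono)
  also have "\<dots> = sqrt K * real n" by (simp add: real_sqrt_mult)
  finally have fe: "frob_err n M (\<lambda>i j. S i j + R i j) \<le> sqrt K * real n" .
  have "real (nnz n S + lowrank_params n R) \<le> 2 * real n" using nnz lr by simp
  with fe show ?thesis unfolding M_def by blast
qed



definition kap :: "real \<Rightarrow> real \<Rightarrow> real" where "kap A e = e^2 * A / 6"
definition Mb :: "real \<Rightarrow> real \<Rightarrow> real" where "Mb A e = 2 * exp (16 * kap A e) + 2"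
definition TT :: "real \<Rightarrow> real \<Rightarrow> real" where "TT A e = 2 * sqrt (Mb A e)"
definition KK :: "real \<Rightarrow> real \<Rightarrow> real" where "KK A e = 2 * exp (4 * kap A e) + TT A e"

lemma TT_ge: "TT A e \<ge> 2"
proof -
  have "1 \<le> Mb A e" using exp_gt_zero[of "16 * kap A e"] unfolding Mb_def by linarith
  then have "1 \<le> sqrt (Mb A e)" by simp
  then show ?thesis unfolding TT_def by simp
qed

lemma KK_ge: "KK A e \<ge> 1"
  using TT_ge[of A e] exp_gt_zero[of "4 * kap A e"] unfolding KK_def by linarith

lemma ln_ge_1: "3 \<le> n \<Longrightarrow> 1 \<le> ln (real n)"
proof -
  assume "3 \<le> n"
  then have "exp 1 \<le> real n" using exp_le by linarith
  then have "ln (exp 1) \<le> ln (real n)" by (rule ln_mono) simp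
  then show ?thesis by simp
qed

lemma Good_event:
  fixes n dn :: nat and r e A :: real
  assumes n3: "3 \<le> n" and e: "0 < e" "e \<le> 1"
    and h1: "3 * ln (real n) \<le> r" "r \<le> A * ln (real n)"
    and h2: "6 / e^2 * r * ln (real n) \<le> real dn"
  shows "real dn > 0" "0 \<le> r" "exp r \<ge> real n ^ 3"
    and "real (card {s\<in>sign_mats n dn. \<not> GG n dn (r / real dn) s \<le> KK A e * real n ^ 2})
           \<le> real (card (sign_mats n dn)) / real n"
proof -
  have ln1: "1 \<le> ln (real n)" by (rule ln_ge_1[OF n3])
  show r0: "0 \<le> r" using h1 ln1 by linarith
  have rpos: "r > 0" using h1 ln1 by linarith
  define D0 where "D0 = 6 / e^2 * r * ln (real n)"
  have D0pos: "D0 > 0" unfolding D0_def using e rpos ln1 by simp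
  have h2': "D0 \<le> real dn" using h2 unfolding D0_def .
  show dpos: "real dn > 0" using h2' D0pos by linarith
  have prodpos: "0 < real dn * D0" using dpos D0pos by simp
  have "exp r \<ge> exp (3 * ln (real n))" using h1 by simp
  also have "exp (3 * ln (real n)) = real n ^ 3"
  proof -
    have "real n powr (real 3) = real n ^ 3" using n3 by (intro powr_realpow) simp
    moreover have "real n powr (real 3) = exp (3 * ln (real n))" using n3 by (simp add: powr_def)
    ultimately show ?thesis by simp
  qed
  finally show "exp r \<ge> real n ^ 3" .
  define a where "a = r / real dn"
  have a0: "0 \<le> a" unfolding a_def using r0 dpos by simp
  have "a \<le> r / D0" unfolding a_def by (rule divide_left_mono[OF h2' r0 prodpos])
  also have "r / D0 = e^2 / (6 * ln (real n))" unfolding D0_def using rpos e ln1 by (simp add: field_simps)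
  also have "\<dots> \<le> 1 / 6"
  proof -
    have "e^2 \<le> 1" using e by (simp add: power_le_one)
    moreover have "6 \<le> 6 * ln (real n)" using ln1 by simp
    ultimately show ?thesis by (simp add: divide_le_eq)
  qed
  finally have a16: "a \<le> 1/6" .
  have "a^2 * real dn = r^2 / real dn" unfolding a_def using dpos by (simp add: power2_eq_square)
  also have "\<dots> \<le> r^2 / D0" by (rule divide_left_mono[OF h2' _ prodpos]) simp
  also have "\<dots> = e^2 * r / (6 * ln (real n))" unfolding D0_def using rpos e ln1 by (simp add: field_simps power2_eq_square)
  also have "\<dots> \<le> e^2 * (A * ln (real n)) / (6 * ln (real n))"
    using h1 ln1 by (intro divide_right_mono mult_left_mono) auto
  also have "\<dots> = kap A e" unfolding kap_def using ln1 by simp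
  finally have akap: "a^2 * real dn \<le> kap A e" .
  have m1b: "m1 dn a \<le> 2 * exp (4 * kap A e)"
  proof -
    have "cosh (2*a) ^ dn \<le> exp ((2*a)^2 * real dn)" using a0 a16 by (intro cosh_pow_le) auto
    also have "\<dots> \<le> exp (4 * kap A e)" using akap by (simp add: power_mult_distrib)
    finally show ?thesis unfolding m1_def by simp
  qed
  have m2b: "4 * m2 dn a \<le> TT A e ^ 2"
  proof -
    have "cosh (4*a) ^ dn \<le> exp ((4*a)^2 * real dn)" using a0 a16 by (intro cosh_pow_le) auto
    also have "\<dots> \<le> exp (16 * kap A e)" using akap by (simp add: power_mult_distrib)
    finally have "m2 dn a \<le> Mb A e" unfolding m2_def Mb_def by simp
    moreover have "TT A e ^ 2 = 4 * Mb A e" unfolding TT_def Mb_def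
      by (simp add: power_mult_distrib)
    ultimately show ?thesis by simp
  qed
  have Tpos: "TT A e > 0" using TT_ge[of A e] by simp
  have npos: "n > 0" using n3 by simp
  have tail: "real (card {s\<in>sign_mats n dn. m1 dn a * real (card (Off n)) + TT A e * real n ^ 2 < GG n dn a s})
          \<le> real (card (sign_mats n dn)) / real n"
    by (rule G_tail[OF Tpos m2b npos])
  have "{s\<in>sign_mats n dn. \<not> GG n dn a s \<le> KK A e * real n ^ 2} \<subseteq>
        {s\<in>sign_mats n dn. m1 dn a * real (card (Off n)) + TT A e * real n ^ 2 < GG n dn a s}"
  proof -
    have "m1 dn a * real (card (Off n)) \<le> 2 * exp (4 * kap A e) * real n ^ 2"
      using m1b card_Off_le[of n] m1_nonneg[of dn a] by (intro mult_mono) auto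
    then have "m1 dn a * real (card (Off n)) + TT A e * real n ^ 2 \<le> KK A e * real n ^ 2"
      unfolding KK_def by (simp add: algebra_simps)
    then show ?thesis by auto
  qed
  then have "card {s\<in>sign_mats n dn. \<not> GG n dn a s \<le> KK A e * real n ^ 2} \<le>
        card {s\<in>sign_mats n dn. m1 dn a * real (card (Off n)) + TT A e * real n ^ 2 < GG n dn a s}"
    by (intro card_mono) (auto simp: sign_mats_finite)
  then show "real (card {s\<in>sign_mats n dn. \<not> GG n dn (r / real dn) s \<le> KK A e * real n ^ 2})
           \<le> real (card (sign_mats n dn)) / real n"
    using tail unfolding a_def by linarith
qed

lemma prob_from_good:
  assumes good: "\<And>s. s \<in> sign_mats n dn \<Longrightarrow> Q s \<Longrightarrow> s \<in> X"
    and bad: "real (card {s\<in>sign_mats n dn. \<not> Q s}) \<le> real (card (sign_mats n dn)) / real n"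
  shows "measure_pmf.prob (sign_pmf n dn) X \<ge> 1 - 1 / real n"
proof -
  let ?O = "sign_mats n dn"
  have fin: "finite ?O" by (rule sign_mats_finite)
  have Npos: "real (card ?O) > 0" using fin sign_mats_ne by (simp add: card_gt_0_iff)
  have "{s\<in>?O. Q s} \<subseteq> ?O \<inter> X" using good by auto
  then have "card {s\<in>?O. Q s} \<le> card (?O \<inter> X)" by (intro card_mono) (auto simp: fin)
  moreover have "card {s\<in>?O. Q s} + card {s\<in>?O. \<not> Q s} = card ?O"
    using fin by (subst card_Un_disjoint[symmetric]) (auto intro: arg_cong[where f = card])
  ultimately have "real (card (?O \<inter> X)) \<ge> real (card ?O) - real (card ?O) / real n"
    using bad by linarith
  then have "real (card (?O \<inter> X)) / real (card ?O) \<ge> (real (card ?O) - real (card ?O) / real n) / real (card ?O)"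
    using Npos by (intro divide_right_mono) auto
  moreover have "(real (card ?O) - real (card ?O) / real n) / real (card ?O) = 1 - 1 / real n"
    using Npos by (simp add: field_simps)
  ultimately show ?thesis unfolding sign_pmf_def using measure_pmf_of_set[OF sign_mats_ne fin] by simp
qed



lemma per_n:
  fixes n dn :: nat and r e A K :: real
  assumes n3: "3 \<le> n" and e: "0 < e" "e \<le> 1"
    and h1: "3 * ln (real n) \<le> r" "r \<le> A * ln (real n)"
    and h2: "6 / e^2 * r * ln (real n) \<le> real dn"
    and K: "K = KK A e"
    and big1: "real n > 2 * (r + 1)" and big2: "real n \<ge> sqrt (K + 2) + 2 * cc K + 1"
  shows "measure_pmf.prob (sign_pmf n dn)
             {s. (\<forall>S. frob_err n (kernel_M dn r s) S \<le> cc K * real n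
                        \<longrightarrow> real (nnz n S) \<ge> (1 / (16 * K)) * (real n)^2) \<and>
                 (\<forall>R. frob_err n (kernel_M dn r s) R \<le> cc K * real n
                        \<longrightarrow> real (lowrank_params n R) \<ge> (1 / (16 * K)) * (real n)^2)}
           \<ge> 1 - 1 / real n" (is ?P1)
    and "measure_pmf.prob (sign_pmf n dn)
             {s. \<exists>S R. real (nnz n S + lowrank_params n R) \<le> 2 * real n \<and>
                        frob_err n (kernel_M dn r s) (\<lambda>i j. S i j + R i j) \<le> sqrt K * real n}
           \<ge> 1 - 1 / real n" (is ?P2)
proof -
  note GE = Good_event[OF n3 e h1 h2]
  have K1: "1 \<le> K" using KK_ge K by simp
  have c0: "0 \<le> cc K" unfolding cc_def using K1 by simp
  have n1: "1 \<le> real n" using n3 by simp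
  have bad: "real (card {s\<in>sign_mats n dn. \<not> GG n dn (r / real dn) s \<le> K * real n ^ 2})
           \<le> real (card (sign_mats n dn)) / real n" using GE(4) K by simp
  show ?P1
  proof (rule prob_from_good[OF _ bad])
    fix s assume s: "s \<in> sign_mats n dn" and Gb: "GG n dn (r / real dn) s \<le> K * real n ^ 2"
    have A1: "real (nnz n S) \<ge> (1 / (16 * K)) * (real n)^2"
      if err: "frob_err n (kernel_M dn r s) S \<le> cc K * real n" for S
      using sparse_lb[OF s GE(2) GE(1) K1 Gb big1 err] by simp
    have A2: "real (lowrank_params n R) \<ge> (1 / (16 * K)) * (real n)^2"
      if err: "frob_err n (kernel_M dn r s) R \<le> cc K * real n" for R
    proof -
      have "n \<le> mat_rank n R"
        by (rule lowrank_lb[OF s GE(2) GE(1) _ Gb GE(3) n1 c0 big2 err]) (use K1 in simp)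
      then have "real n * real n \<le> real (lowrank_params n R)"
        unfolding lowrank_params_def by (simp add: mult_left_mono)
      moreover have "(1 / (16 * K)) * (real n)^2 \<le> real n * real n"
      proof -
        have "1 / (16 * K) \<le> 1" using K1 by simp
        then have "(1 / (16 * K)) * (real n * real n) \<le> 1 * (real n * real n)"
          by (intro mult_right_mono) auto
        then show ?thesis by (simp add: power2_eq_square)
      qed
      ultimately show ?thesis by linarith
    qed
    show "s \<in> {s. (\<forall>S. frob_err n (kernel_M dn r s) S \<le> cc K * real n
                        \<longrightarrow> real (nnz n S) \<ge> (1 / (16 * K)) * (real n)^2) \<and>
                 (\<forall>R. frob_err n (kernel_M dn r s) R \<le> cc K * real n
                        \<longrightarrow> real (lowrank_params n R) \<ge> (1 / (16 * K)) * (real n)^2)}"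
      using A1 A2 by blast
  qed
  show ?P2
  proof (rule prob_from_good[OF _ bad])
    fix s assume s: "s \<in> sign_mats n dn" and Gb: "GG n dn (r / real dn) s \<le> K * real n ^ 2"
    from upper_est[OF s GE(2) _ Gb] K1
    show "s \<in> {s. \<exists>S R. real (nnz n S + lowrank_params n R) \<le> 2 * real n \<and>
                        frob_err n (kernel_M dn r s) (\<lambda>i j. S i j + R i j) \<le> sqrt K * real n}"
      by simp
  qed
qed

lemma ev_big1: "eventually (\<lambda>n. real n > 2 * (A * ln (real n) + 1)) sequentially"
  by real_asymp

lemma ev_big2: "eventually (\<lambda>n. real n \<ge> X) sequentially"
  by real_asymp


theorem mainTheorem2:
  shows "\<exists>a0>0. \<exists>\<epsilon>0>0. \<epsilon>0 \<le> 1 \<and>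
    (\<forall>\<epsilon>::real. 0 < \<epsilon> \<and> \<epsilon> \<le> \<epsilon>0 \<longrightarrow>
      (\<forall>(A::real) (B::real) (r::nat \<Rightarrow> real) (d::nat \<Rightarrow> nat).
        (\<forall>\<^sub>F n in sequentially. a0 * ln (real n) \<le> r n \<and> r n \<le> A * ln (real n)) \<and>
        (\<forall>\<^sub>F n in sequentially. 6 / \<epsilon>^2 * r n * ln (real n) \<le> real (d n) \<and>
                                 real (d n) \<le> B / \<epsilon>^2 * r n * ln (real n))
        \<longrightarrow>
        (\<exists>c>0. \<exists>c'>0. \<forall>\<^sub>F n in sequentially.
           measure_pmf.prob (sign_pmf n (d n))
             {s. (\<forall>S. frob_err n (kernel_M (d n) (r n) s) S \<le> c * real n
                        \<longrightarrow> real (nnz n S) \<ge> c' * (real n)^2) \<and>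
                 (\<forall>R. frob_err n (kernel_M (d n) (r n) s) R \<le> c * real n
                        \<longrightarrow> real (lowrank_params n R) \<ge> c' * (real n)^2)}
           \<ge> 1 - 1 / real n) \<and>
        (\<exists>C>0. \<exists>C'>0. \<forall>\<^sub>F n in sequentially.
           measure_pmf.prob (sign_pmf n (d n))
             {s. \<exists>S R. real (nnz n S + lowrank_params n R) \<le> C * real n \<and>
                        frob_err n (kernel_M (d n) (r n) s) (\<lambda>i j. S i j + R i j) \<le> C' * real n}
           \<ge> 1 - 1 / real n)))"
  proof -
  have core: "(\<exists>c>0. \<exists>c'>0. \<forall>\<^sub>F n in sequentially.
           measure_pmf.prob (sign_pmf n (d n))
             {s. (\<forall>S. frob_err n (kernel_M (d n) (r n) s) S \<le> c * real n
                        \<longrightarrow> real (nnz n S) \<ge> c' * (real n)^2) \<and>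
                 (\<forall>R. frob_err n (kernel_M (d n) (r n) s) R \<le> c * real n
                        \<longrightarrow> real (lowrank_params n R) \<ge> c' * (real n)^2)}
           \<ge> 1 - 1 / real n) \<and>
        (\<exists>C>0. \<exists>C'>0. \<forall>\<^sub>F n in sequentially.
           measure_pmf.prob (sign_pmf n (d n))
             {s. \<exists>S R. real (nnz n S + lowrank_params n R) \<le> C * real n \<and>
                        frob_err n (kernel_M (d n) (r n) s) (\<lambda>i j. S i j + R i j) \<le> C' * real n}
           \<ge> 1 - 1 / real n)"
    if e: "0 < \<epsilon> \<and> \<epsilon> \<le> 1"
      and H1: "\<forall>\<^sub>F n in sequentially. 3 * ln (real n) \<le> r n \<and> r n \<le> A * ln (real n)"
      and H2: "\<forall>\<^sub>F n in sequentially. 6 / \<epsilon>^2 * r n * ln (real n) \<le> real (d n) \<and>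
                                 real (d n) \<le> B / \<epsilon>^2 * r n * ln (real n)"
    for \<epsilon> A B :: real and r :: "nat \<Rightarrow> real" and d :: "nat \<Rightarrow> nat"
  proof -
    define K where "K = KK A \<epsilon>"
    have K1: "1 \<le> K" unfolding K_def by (rule KK_ge)
    have e1: "0 < \<epsilon>" "\<epsilon> \<le> 1" using e by auto
    have ev: "\<forall>\<^sub>F n in sequentially. 3 \<le> n \<and> 3 * ln (real n) \<le> r n \<and> r n \<le> A * ln (real n) \<and>
              6 / \<epsilon>^2 * r n * ln (real n) \<le> real (d n) \<and> real n > 2 * (r n + 1) \<and>
              real n \<ge> sqrt (K + 2) + 2 * cc K + 1"
      using H1 H2 ev_big1[of A] ev_big2[of "sqrt (K + 2) + 2 * cc K + 1"] eventually_ge_at_top[of "3::nat"]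
    proof eventually_elim
      case (elim n)
      then have a: "3 * ln (real n) \<le> r n" "r n \<le> A * ln (real n)"
        "6 / \<epsilon>^2 * r n * ln (real n) \<le> real (d n)" "2 * (A * ln (real n) + 1) < real n"
        "sqrt (K + 2) + 2 * cc K + 1 \<le> real n" "3 \<le> n" by auto
      moreover have "2 * (r n + 1) < real n"
      proof -
        have "2 * (r n + 1) \<le> 2 * (A * ln (real n) + 1)" using a(2) by simp
        then show ?thesis using a(4) by (rule le_less_trans)
      qed
      ultimately show ?case by blast
    qed
    have P1: "\<forall>\<^sub>F n in sequentially.
           measure_pmf.prob (sign_pmf n (d n))
             {s. (\<forall>S. frob_err n (kernel_M (d n) (r n) s) S \<le> cc K * real n
                        \<longrightarrow> real (nnz n S) \<ge> (1 / (16 * K)) * (real n)^2) \<and>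
                 (\<forall>R. frob_err n (kernel_M (d n) (r n) s) R \<le> cc K * real n
                        \<longrightarrow> real (lowrank_params n R) \<ge> (1 / (16 * K)) * (real n)^2)}
           \<ge> 1 - 1 / real n"
      using ev by eventually_elim (rule per_n(1)[OF _ e1 _ _ _ K_def], auto)
    have P2: "\<forall>\<^sub>F n in sequentially.
           measure_pmf.prob (sign_pmf n (d n))
             {s. \<exists>S R. real (nnz n S + lowrank_params n R) \<le> 2 * real n \<and>
                        frob_err n (kernel_M (d n) (r n) s) (\<lambda>i j. S i j + R i j) \<le> sqrt K * real n}
           \<ge> 1 - 1 / real n"
      using ev by eventually_elim (rule per_n(2)[OF _ e1 _ _ _ K_def], auto)
    have cpos: "cc K > 0" unfolding cc_def using K1 by simp
    have c'pos: "1 / (16 * K) > 0" using K1 by simp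
    have C'pos: "sqrt K > 0" using K1 by simp
    show ?thesis
    proof
      show "\<exists>c>0. \<exists>c'>0. \<forall>\<^sub>F n in sequentially.
           measure_pmf.prob (sign_pmf n (d n))
             {s. (\<forall>S. frob_err n (kernel_M (d n) (r n) s) S \<le> c * real n
                        \<longrightarrow> real (nnz n S) \<ge> c' * (real n)^2) \<and>
                 (\<forall>R. frob_err n (kernel_M (d n) (r n) s) R \<le> c * real n
                        \<longrightarrow> real (lowrank_params n R) \<ge> c' * (real n)^2)}
           \<ge> 1 - 1 / real n"
        using P1 cpos c'pos by blast
      show "\<exists>C>0. \<exists>C'>0. \<forall>\<^sub>F n in sequentially.
           measure_pmf.prob (sign_pmf n (d n))
             {s. \<exists>S R. real (nnz n S + lowrank_params n R) \<le> C * real n \<and>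
                        frob_err n (kernel_M (d n) (r n) s) (\<lambda>i j. S i j + R i j) \<le> C' * real n}
           \<ge> 1 - 1 / real n"
        apply (rule exI[of _ "2::real"])
        apply (rule conjI)
         apply simp
        apply (rule exI[of _ "sqrt K"])
        using P2 C'pos by simp
    qed
  qed
  show ?thesis
    apply (rule exI[where x = "3::real"])
    apply (rule conjI, simp)
    apply (rule exI[where x = "1::real"])
    apply (intro conjI allI impI)
       apply simp
      apply simp
    subgoal for \<epsilon> A B r d
      using core[where \<epsilon>=\<epsilon> and A=A and B=B and r=r and d=d] by blast
    subgoal for \<epsilon> A B r d
      using core[where \<epsilon>=\<epsilon> and A=A and B=B and r=r and d=d] by blast
    done
qed

end
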